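(* Assume the standing setting below and let $k\ge1$ be such that (R1)–(R3) hold. Let $\lambda\in\mathbb{R}$, let $\bar y\in\mathbb{R}^k$ have last component $0$, let $x=V_k\bar y$, and assume $J^{(k)}(\bar y,\lambda)$ is nonsingular. Define the projected Newton step $$\begin{pmatrix}\Delta y\\ \Delta\lambda\end{pmatrix}=-J^{(k)}(\bar y,\lambda)^{-1}F^{(k)}(\bar y,\lambda),\qquad \Delta x=V_k\Delta y.$$ Then $$\begin{pmatrix}\Delta x\\ \Delta\lambda\end{pmatrix}^T\nabla f(x,\lambda)=-\|F(x,\lambda)\|^2\le 0,$$ so $(\Delta x,\Delta\lambda)$ is a descent direction for $f$ at $(x,\lambda)$ whenever $F(x,\lambda)\ne0$.
   Context: Standing setting. $A\in\mathbb{R}^{m\times n}$ with $m\ge n$, $b\in\mathbb{R}^m$, $b\ne0$, $\sigma>0$, $\|\cdot\|$ the Euclidean norm. $F(x,\lambda)=\begin{pmatrix}\lambda A^T(Ax-b)+x\\ \tfrac12\|Ax-b\|^2-\tfrac{\sigma^2}{2}\end{pmatrix}$, with Jacobian $J(x,\lambda)=\begin{pmatrix}\lambda A^TA+I & A^T(Ax-b)\\ (Ax-b)^TA & 0\end{pmatrix}$, and merit function $f(x,\lambda)=\tfrac12\|F(x,\lambda)\|^2$ (so $\nabla f=J^TF$). Golub–Kahan bidiagonalization (Bidiag1): $u_0=b/\|b\|$, $\nu_0v_{-1}=0$, and for $j=0,1,2,\dots$: $r_j=A^Tu_j-\nu_jv_{j-1}$, $\mu_j=\|r_j\|$, $v_j=r_j/\mu_j$,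 $p_j=Av_j-\mu_ju_j$, $\nu_{j+1}=\|p_j\|$, $u_{j+1}=p_j/\nu_{j+1}$. No breakdown is assumed (all $\mu_j,\nu_j>0$), together with: (R1) $V_{k+1}=[v_0,\dots,v_k]$ and $U_{k+1}=[u_0,\dots,u_k]$ have orthonormal columns; (R2) $AV_k=U_{k+1}B_{k+1,k}$; (R3) $A^TU_{k+1}=V_kB_{k+1,k}^T+\mu_kv_ke_{k+1}^T$, where $V_k=[v_0,\dots,v_{k-1}]$, $e_{k+1}=(0,\dots,0,1)^T\in\mathbb{R}^{k+1}$, and $B_{k+1,k}\in\mathbb{R}^{(k+1)\times k}$ is lower bidiagonal with diagonal $\mu_0,\dots,\mu_{k-1}$ and subdiagonal $\nu_1,\dots,\nu_k$. $c_{k+1}=(\|b\|,0,\dots,0)^T\in\mathbb{R}^{k+1}$. $F^{(k)}(y,\lambda)=\begin{pmatrix}\lambda B_{k+1,k}^T(B_{k+1,k}y-c_{k+1})+y\\ \tfrac12\|B_{k+1,k}y-c_{k+1}\|^2-\tfrac{\sigma^2}{2}\end{pmatrix}$, $J^{(k)}(y,\lambda)=\begin{pmatrix}\lambda B_{k+1,k}^TB_{k+1,k}+I_k & B_{k+1,k}^T(B_{k+1,k}y-c_{k+1})\\ (B_{k+1,k}y-c_{k+1})^TB_{k+1,k} & 0\end{pmatrix}$. *)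

theory Defs
  imports "Jordan_Normal_Form.Gauss_Jordan_Elimination"
begin

definition vnorm :: "real vec \<Rightarrow> real" where
  "vnorm x = sqrt (x \<bullet> x)"

definition outer :: "real vec \<Rightarrow> real vec \<Rightarrow> real mat" where
  "outer x y = mat (dim_vec x) (dim_vec y) (\<lambda>(i,j). x $ i * y $ j)"

definition Fmap :: "real mat \<Rightarrow> real vec \<Rightarrow> real \<Rightarrow> real vec \<Rightarrow> real \<Rightarrow> real vec" where
  "Fmap A b \<sigma> x lam =
     (lam \<cdot>\<^sub>v (transpose_mat A *\<^sub>v (A *\<^sub>v x - b)) + x)
     @\<^sub>v vec 1 (\<lambda>_. (1/2) * (vnorm (A *\<^sub>v x - b))\<^sup>2 - \<sigma>\<^sup>2 / 2)"

definition Jmap :: "real mat \<Rightarrow> real vec \<Rightarrow> real vec \<Rightarrow> real \<Rightarrow> real mat" where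
  "Jmap A b x lam =
     four_block_mat
       (lam \<cdot>\<^sub>m (transpose_mat A * A) + 1\<^sub>m (dim_col A))
       (mat_of_cols (dim_col A) [transpose_mat A *\<^sub>v (A *\<^sub>v x - b)])
       (mat_of_rows (dim_col A) [transpose_mat A *\<^sub>v (A *\<^sub>v x - b)])
       (0\<^sub>m 1 1)"

definition merit :: "real mat \<Rightarrow> real vec \<Rightarrow> real \<Rightarrow> real vec \<Rightarrow> real \<Rightarrow> real" where
  "merit A b \<sigma> x lam = (1/2) * (vnorm (Fmap A b \<sigma> x lam))\<^sup>2"

definition grad_merit :: "real mat \<Rightarrow> real vec \<Rightarrow> real \<Rightarrow> real vec \<Rightarrow> real \<Rightarrow> real vec" where
  "grad_merit A b \<sigma> x lam = transpose_mat (Jmap A b x lam) *\<^sub>v Fmap A b \<sigma> x lam"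

(* Golub-Kahan bidiagonalization (Bidiag1) run up to step k without breakdown:
   u j, v j, mu j for j \<le> k and nu j for 1 \<le> j \<le> k; nu 0 v(-1) = 0. *)
definition bidiag1_upto ::
  "real mat \<Rightarrow> real vec \<Rightarrow> nat \<Rightarrow> (nat \<Rightarrow> real vec) \<Rightarrow> (nat \<Rightarrow> real vec)
     \<Rightarrow> (nat \<Rightarrow> real) \<Rightarrow> (nat \<Rightarrow> real) \<Rightarrow> bool" where
  "bidiag1_upto A b k u v mu nu \<longleftrightarrow>
     u 0 = (1 / vnorm b) \<cdot>\<^sub>v b \<and>
     (\<forall>j\<le>k. let r = (if j = 0 then transpose_mat A *\<^sub>v u 0
                       else transpose_mat A *\<^sub>v u j - nu j \<cdot>\<^sub>v v (j - 1))
             in mu j = vnorm r \<and> mu j > 0 \<and> v j = (1 / mu j) \<cdot>\<^sub>v r) \<and>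
     (\<forall>j<k. let p = A *\<^sub>v v j - mu j \<cdot>\<^sub>v u j
            in nu (j+1) = vnorm p \<and> nu (j+1) > 0 \<and> u (j+1) = (1 / nu (j+1)) \<cdot>\<^sub>v p)"

definition Vmat :: "nat \<Rightarrow> (nat \<Rightarrow> real vec) \<Rightarrow> nat \<Rightarrow> real mat" where
  "Vmat n v j = mat n j (\<lambda>(i,l). v l $ i)"

definition Bmat :: "(nat \<Rightarrow> real) \<Rightarrow> (nat \<Rightarrow> real) \<Rightarrow> nat \<Rightarrow> real mat" where
  "Bmat mu nu k = mat (k+1) k (\<lambda>(i,l). if i = l then mu l else if i = l + 1 then nu (l+1) else 0)"

definition cvec :: "real vec \<Rightarrow> nat \<Rightarrow> real vec" where
  "cvec b k = vec (k+1) (\<lambda>i. if i = 0 then vnorm b else 0)"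

definition Fk :: "real mat \<Rightarrow> real vec \<Rightarrow> real \<Rightarrow> real vec \<Rightarrow> real \<Rightarrow> real vec" where
  "Fk B c \<sigma> y lam = Fmap B c \<sigma> y lam"

definition Jk :: "real mat \<Rightarrow> real vec \<Rightarrow> real vec \<Rightarrow> real \<Rightarrow> real mat" where
  "Jk B c y lam = Jmap B c y lam"

end

theory Submission imports Defs begin

lemma orth_prod:
  fixes M :: "real mat"
  assumes M: "M \<in> carrier_mat r c" and MM: "transpose_mat M * M = 1\<^sub>m c"
    and p: "p \<in> carrier_vec c" and q: "q \<in> carrier_vec c"
  shows "(M *\<^sub>v p) \<bullet> (M *\<^sub>v q) = p \<bullet> q"
proof -
  have "(M *\<^sub>v p) \<bullet> (M *\<^sub>v q) = (transpose_mat M *\<^sub>v (M *\<^sub>v p)) \<bullet> q"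
    using transpose_vec_mult_scalar[OF M q, of "M *\<^sub>v p"] M p by simp
  also have "transpose_mat M *\<^sub>v (M *\<^sub>v p) = (transpose_mat M * M) *\<^sub>v p"
    using M p by (intro assoc_mult_mat_vec[symmetric, of _ c r]) auto
  finally show ?thesis using MM p by simp
qed

lemma smult_mat_vec:
  fixes M :: "real mat"
  assumes "q \<in> carrier_vec (dim_col M)"
  shows "(c \<cdot>\<^sub>m M) *\<^sub>v q = c \<cdot>\<^sub>v (M *\<^sub>v q)"
proof (rule eq_vecI)
  fix i assume i: "i < dim_vec (c \<cdot>\<^sub>v (M *\<^sub>v q))"
  then show "((c \<cdot>\<^sub>m M) *\<^sub>v q) $ i = (c \<cdot>\<^sub>v (M *\<^sub>v q)) $ i"
    using assms by (simp add: scalar_prod_def sum_distrib_left mult.assoc)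
qed simp

lemma cols1: "w \<in> carrier_vec N \<Longrightarrow> mat_of_cols N [w] *\<^sub>v vec 1 (\<lambda>_. dl) = dl \<cdot>\<^sub>v (w :: real vec)"
  by (intro eq_vecI) (simp_all add: mat_of_cols_def scalar_prod_def row_def)

lemma rows1: "w \<in> carrier_vec N \<Longrightarrow> dx \<in> carrier_vec N \<Longrightarrow>
   mat_of_rows N [w] *\<^sub>v dx + 0\<^sub>m 1 1 *\<^sub>v vec 1 (\<lambda>_. dl) = vec 1 (\<lambda>_. w \<bullet> (dx :: real vec))"
  by (intro eq_vecI) (simp_all add: mat_of_rows_def scalar_prod_def row_def)

lemma mat_vec_uminus: "(w :: real vec) \<in> carrier_vec (dim_col A) \<Longrightarrow> A *\<^sub>v (- w) = - (A *\<^sub>v w)"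
  by (intro eq_vecI) (auto simp: scalar_prod_uminus_right)

lemma quad_form:
  fixes X :: "real mat"
  assumes X: "X \<in> carrier_mat R N" and p: "p \<in> carrier_vec N" and q: "q \<in> carrier_vec N"
  shows "p \<bullet> ((lam \<cdot>\<^sub>m (transpose_mat X * X) + 1\<^sub>m N) *\<^sub>v q) = lam * ((X *\<^sub>v p) \<bullet> (X *\<^sub>v q)) + p \<bullet> q"
proof -
  have XX: "transpose_mat X * X \<in> carrier_mat N N" using X by simp
  have "(lam \<cdot>\<^sub>m (transpose_mat X * X) + 1\<^sub>m N) *\<^sub>v q = lam \<cdot>\<^sub>v (transpose_mat X *\<^sub>v (X *\<^sub>v q)) + q"
    using X q XX by (simp add: add_mult_distrib_mat_vec[of _ N N] smult_mat_vec[of q])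
  moreover have "p \<bullet> (transpose_mat X *\<^sub>v (X *\<^sub>v q)) = (X *\<^sub>v p) \<bullet> (X *\<^sub>v q)"
  proof -
    have "p \<bullet> (transpose_mat X *\<^sub>v (X *\<^sub>v q)) = (transpose_mat X *\<^sub>v (X *\<^sub>v q)) \<bullet> p"
      using X p q by (intro comm_scalar_prod[of p N]) auto
    also have "\<dots> = (X *\<^sub>v q) \<bullet> (X *\<^sub>v p)"
      using transpose_vec_mult_scalar[OF X p, of "X *\<^sub>v q"] X q by simp
    also have "\<dots> = (X *\<^sub>v p) \<bullet> (X *\<^sub>v q)"
      using X p q by (intro comm_scalar_prod[of _ R]) auto
    finally show ?thesis .
  qed
  ultimately show ?thesis using X p q
    by (simp add: scalar_prod_add_distrib[of p N])
qed

lemma block_prod: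
  fixes M :: "real mat"
  assumes M: "M \<in> carrier_mat N N" and w: "w \<in> carrier_vec N"
    and dx: "dx \<in> carrier_vec N" and a: "a \<in> carrier_vec N" and s: "s \<in> carrier_vec 1"
  shows "(dx @\<^sub>v vec 1 (\<lambda>_. dl)) \<bullet> (transpose_mat (four_block_mat M (mat_of_cols N [w]) (mat_of_rows N [w]) (0\<^sub>m 1 1)) *\<^sub>v (a @\<^sub>v s))
     = a \<bullet> (M *\<^sub>v dx) + dl * (a \<bullet> w) + s $ 0 * (w \<bullet> dx)"
proof -
  let ?J = "four_block_mat M (mat_of_cols N [w]) (mat_of_rows N [w]) (0\<^sub>m 1 1)"
  have C: "mat_of_cols N [w] \<in> carrier_mat N 1" "mat_of_rows N [w] \<in> carrier_mat 1 N" by auto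
  have J: "?J \<in> carrier_mat (N+1) (N+1)" using four_block_carrier_mat[OF M zero_carrier_mat[of 1 1]] by simp
  have D: "dx @\<^sub>v vec 1 (\<lambda>_. dl) \<in> carrier_vec (N+1)" using dx by (intro append_carrier_vec) auto
  have F: "a @\<^sub>v s \<in> carrier_vec (N+1)" using a s by (intro append_carrier_vec) auto
  have "(dx @\<^sub>v vec 1 (\<lambda>_. dl)) \<bullet> (transpose_mat ?J *\<^sub>v (a @\<^sub>v s))
      = (transpose_mat ?J *\<^sub>v (a @\<^sub>v s)) \<bullet> (dx @\<^sub>v vec 1 (\<lambda>_. dl))"
  proof -
    have JT: "transpose_mat ?J \<in> carrier_mat (N+1) (N+1)" using J by simp
    show ?thesis using comm_scalar_prod[OF D mult_mat_vec_carrier[OF JT F]] .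
  qed
  also have "\<dots> = (a @\<^sub>v s) \<bullet> (?J *\<^sub>v (dx @\<^sub>v vec 1 (\<lambda>_. dl)))"
    by (rule transpose_vec_mult_scalar[OF J D F])
  also have "?J *\<^sub>v (dx @\<^sub>v vec 1 (\<lambda>_. dl))
     = (M *\<^sub>v dx + mat_of_cols N [w] *\<^sub>v vec 1 (\<lambda>_. dl)) @\<^sub>v (mat_of_rows N [w] *\<^sub>v dx + 0\<^sub>m 1 1 *\<^sub>v vec 1 (\<lambda>_. dl))"
    by (rule four_block_mat_mult_vec[OF M C zero_carrier_mat dx vec_carrier])
  also have "mat_of_cols N [w] *\<^sub>v vec 1 (\<lambda>_. dl) = dl \<cdot>\<^sub>v w"
    using w by (rule cols1)
  also have "mat_of_rows N [w] *\<^sub>v dx + 0\<^sub>m 1 1 *\<^sub>v vec 1 (\<lambda>_. dl) = vec 1 (\<lambda>_. w \<bullet> dx)"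
    using w dx by (rule rows1)
  also have "(a @\<^sub>v s) \<bullet> ((M *\<^sub>v dx + dl \<cdot>\<^sub>v w) @\<^sub>v vec 1 (\<lambda>_. w \<bullet> dx))
      = a \<bullet> (M *\<^sub>v dx + dl \<cdot>\<^sub>v w) + s \<bullet> vec 1 (\<lambda>_. w \<bullet> dx)"
    using a s M w dx by (intro scalar_prod_append) auto
  also have "a \<bullet> (M *\<^sub>v dx + dl \<cdot>\<^sub>v w) = a \<bullet> (M *\<^sub>v dx) + dl * (a \<bullet> w)"
    using a M w dx by (simp add: scalar_prod_add_distrib[of a N])
  also have "s \<bullet> vec 1 (\<lambda>_. w \<bullet> dx) = s $ 0 * (w \<bullet> dx)"
    using s by (simp add: scalar_prod_def)
  finally show ?thesis .
qed

lemma self_prod_pos: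
  fixes F :: "real vec"
  assumes "F \<in> carrier_vec N" "F \<noteq> 0\<^sub>v N"
  shows "F \<bullet> F > 0"
proof -
  have ge: "F \<bullet> F = (\<Sum>i<N. F $ i * F $ i)" using assms(1) by (simp add: scalar_prod_def lessThan_atLeast0)
  obtain i where i: "i < N" "F $ i \<noteq> 0" using assms by (metis carrier_vecD eq_vecI index_zero_vec)
  have "0 < (F $ i)^2" using i by simp
  hence "0 < F $ i * F $ i" by (simp add: power2_eq_square)
  also have "\<dots> \<le> (\<Sum>i<N. F $ i * F $ i)"
    using i by (intro member_le_sum) auto
  finally show ?thesis using ge by simp
qed

lemma self_prod_ge: "(F :: real vec) \<bullet> F \<ge> 0"
  by (simp add: scalar_prod_def sum_nonneg)

theorem theorem3p3:
  fixes A :: "real mat" and b :: "real vec" and \<sigma> :: real and m n k :: nat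
    and u v :: "nat \<Rightarrow> real vec" and mu nu :: "nat \<Rightarrow> real"
    and lam :: real and ybar :: "real vec"
  assumes A: "A \<in> carrier_mat m n" and mn: "m \<ge> n"
    and b: "b \<in> carrier_vec m" and b0: "b \<noteq> 0\<^sub>v m"
    and sig: "\<sigma> > 0"
    and k1: "k \<ge> 1"
    and bid: "bidiag1_upto A b k u v mu nu"
    and R1: "transpose_mat (Vmat n v (k+1)) * Vmat n v (k+1) = 1\<^sub>m (k+1)"
            "transpose_mat (Vmat m u (k+1)) * Vmat m u (k+1) = 1\<^sub>m (k+1)"
    and R2: "A * Vmat n v k = Vmat m u (k+1) * Bmat mu nu k"
    and R3: "transpose_mat A * Vmat m u (k+1)
               = Vmat n v k * transpose_mat (Bmat mu nu k)
                 + mu k \<cdot>\<^sub>m outer (v k) (unit_vec (k+1) k)"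
    and y: "ybar \<in> carrier_vec k" and ylast: "ybar $ (k - 1) = 0"
    and nonsing: "invertible_mat (Jk (Bmat mu nu k) (cvec b k) ybar lam)"
  shows
    "let x = Vmat n v k *\<^sub>v ybar;
         d = - (the (mat_inverse (Jk (Bmat mu nu k) (cvec b k) ybar lam))
                 *\<^sub>v Fk (Bmat mu nu k) (cvec b k) \<sigma> ybar lam);
         dy = vec_first d k; dl = d $ k;
         dx = Vmat n v k *\<^sub>v dy;
         g = grad_merit A b \<sigma> x lam;
         F = Fmap A b \<sigma> x lam
     in (dx @\<^sub>v vec 1 (\<lambda>_. dl)) \<bullet> g = - (vnorm F)\<^sup>2
        \<and> (dx @\<^sub>v vec 1 (\<lambda>_. dl)) \<bullet> g \<le> 0
        \<and> (F \<noteq> 0\<^sub>v (n+1) \<longrightarrow> (dx @\<^sub>v vec 1 (\<lambda>_. dl)) \<bullet> g < 0)"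
proof -
  define B where "B = Bmat mu nu k"
  define c where "c = cvec b k"
  define V where "V = Vmat n v k"
  define U where "U = Vmat m u (k+1)"
  define W where "W = Vmat n v (k+1)"
  have Bc: "B \<in> carrier_mat (k+1) k" unfolding B_def Bmat_def by simp
  have cc: "c \<in> carrier_vec (k+1)" unfolding c_def cvec_def by simp
  have Vc: "V \<in> carrier_mat n k" unfolding V_def Vmat_def by simp
  have Uc: "U \<in> carrier_mat m (k+1)" unfolding U_def Vmat_def by simp
  have UU: "transpose_mat U * U = 1\<^sub>m (k+1)" using R1(2) unfolding U_def .
  have VV: "transpose_mat V * V = 1\<^sub>m k"
  proof (rule eq_matI)
    fix i j assume i: "i < dim_row (1\<^sub>m k)" and j: "j < dim_col (1\<^sub>m k)"
    have "(transpose_mat V * V) $$ (i,j) = (transpose_mat W * W) $$ (i,j)"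
      using i j unfolding V_def W_def by (simp add: Vmat_def scalar_prod_def)
    also have "\<dots> = 1\<^sub>m (k+1) $$ (i,j)" using R1(1) unfolding W_def by simp
    also have "\<dots> = 1\<^sub>m k $$ (i,j)" using i j by simp
    finally show "(transpose_mat V * V) $$ (i,j) = 1\<^sub>m k $$ (i,j)" .
  qed (use Vc in auto)
  have AV: "A * V = U * B" using R2 unfolding V_def U_def B_def .
  have dimvk: "dim_vec (v k) = n"
  proof -
    have d1: "dim_row (transpose_mat A * Vmat m u (k+1)) = n" using A by simp
    have d2: "dim_row (Vmat n v k * transpose_mat (Bmat mu nu k)
                 + mu k \<cdot>\<^sub>m outer (v k) (unit_vec (k+1) k)) = dim_vec (v k)"
      unfolding outer_def plus_mat_def by simp
    have d3: "dim_row (transpose_mat A * Vmat m u (k+1)) = dim_row (Vmat n v k * transpose_mat (Bmat mu nu k)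
                 + mu k \<cdot>\<^sub>m outer (v k) (unit_vec (k+1) k))" by (simp only: R3)
    show ?thesis using d1 d2 d3 by linarith
  qed
  have bb: "b \<bullet> b > 0" using self_prod_pos[OF b b0] .
  have nb: "vnorm b \<noteq> 0" unfolding vnorm_def using bb by simp
  have u0: "u 0 = (1 / vnorm b) \<cdot>\<^sub>v b" by (rule conjunct1[OF bid[unfolded bidiag1_upto_def]])
  have bU: "b = U *\<^sub>v c"
  proof (rule eq_vecI)
    fix i assume "i < dim_vec (U *\<^sub>v c)"
    hence i: "i < m" using Uc by simp
    have "(U *\<^sub>v c) $ i = (\<Sum>l = 0..<k+1. u l $ i * (if l = 0 then vnorm b else 0))"
      using i Uc unfolding U_def c_def by (simp add: Vmat_def cvec_def scalar_prod_def del: sum.op_ivl_Suc)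
    also have "\<dots> = (\<Sum>l = 0..<k+1. if l = 0 then u l $ i * vnorm b else 0)"
      by (rule sum.cong) auto
    also have "\<dots> = u 0 $ i * vnorm b"
      by (simp del: sum.op_ivl_Suc)
    also have "\<dots> = b $ i" using i b nb u0 by simp
    finally show "b $ i = (U *\<^sub>v c) $ i" by simp
  qed (use b Uc in simp)
  define r where "r = B *\<^sub>v ybar - c"
  have rc: "r \<in> carrier_vec (k+1)" unfolding r_def using Bc cc y by simp
  have rk: "r $ k = 0"
  proof -
    have "(B *\<^sub>v ybar) $ k = (\<Sum>l = 0..<k. B $$ (k,l) * ybar $ l)"
      using Bc y by (simp add: scalar_prod_def row_def)
    also have "\<dots> = 0"
    proof (rule sum.neutral, intro ballI)
      fix l assume l: "l \<in> {0..<k}"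
      show "B $$ (k,l) * ybar $ l = 0"
      proof (cases "k = l + 1")
        case True then have "l = k - 1" by simp
        then show ?thesis using ylast by simp
      next
        case False then show ?thesis using l unfolding B_def Bmat_def by simp
      qed
    qed
    finally show ?thesis unfolding r_def c_def cvec_def using k1 Bc by simp
  qed
  have Axb: "A *\<^sub>v (V *\<^sub>v ybar) - b = U *\<^sub>v r"
  proof -
    have "A *\<^sub>v (V *\<^sub>v ybar) = U *\<^sub>v (B *\<^sub>v ybar)"
      using assoc_mult_mat_vec[OF A Vc y] assoc_mult_mat_vec[OF Uc Bc y] AV by simp
    then show ?thesis unfolding r_def bU
      using Uc Bc cc y by (simp add: mult_minus_distrib_mat_vec[of U m "k+1"])
  qed
  define E where "E = mu k \<cdot>\<^sub>m outer (v k) (unit_vec (k+1) k)"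
  have Ec: "E \<in> carrier_mat n (k+1)" unfolding E_def outer_def using dimvk by simp
  have Er: "E *\<^sub>v r = 0\<^sub>v n"
  proof (rule eq_vecI)
    fix i assume "i < dim_vec (0\<^sub>v n)"
    hence i: "i < n" by simp
    have "(E *\<^sub>v r) $ i = (\<Sum>j = 0..<k+1. E $$ (i,j) * r $ j)"
      using i Ec rc by (simp add: scalar_prod_def row_def)
    also have "\<dots> = 0"
    proof (rule sum.neutral, intro ballI)
      fix j assume j: "j \<in> {0..<k+1}"
      show "E $$ (i,j) * r $ j = 0"
      proof (cases "j = k")
        case True then show ?thesis using rk by simp
      next
        case False then show ?thesis using i j dimvk unfolding E_def outer_def by simp
      qed
    qed
    finally show "(E *\<^sub>v r) $ i = 0\<^sub>v n $ i" using i by simp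
  qed (use Ec in simp)
  define wk where "wk = transpose_mat B *\<^sub>v r"
  have wkc: "wk \<in> carrier_vec k" unfolding wk_def using Bc rc by simp
  have w: "transpose_mat A *\<^sub>v (U *\<^sub>v r) = V *\<^sub>v wk"
  proof -
    have "transpose_mat A *\<^sub>v (U *\<^sub>v r) = (transpose_mat A * U) *\<^sub>v r"
      using A Uc rc by (intro assoc_mult_mat_vec[symmetric, of _ n m]) auto
    also have "\<dots> = (V * transpose_mat B + E) *\<^sub>v r"
      using R3 unfolding U_def V_def B_def E_def by simp
    also have "\<dots> = (V * transpose_mat B) *\<^sub>v r + E *\<^sub>v r"
      using Vc Bc Ec rc by (intro add_mult_distrib_mat_vec[of _ n "k+1"]) auto
    also have "\<dots> = V *\<^sub>v wk" unfolding Er wk_def using Vc Bc rc by simp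
    finally show ?thesis .
  qed
  have nr: "vnorm (U *\<^sub>v r) = vnorm r"
    unfolding vnorm_def using orth_prod[OF Uc UU rc rc] by simp
  define F1 where "F1 = lam \<cdot>\<^sub>v wk + ybar"
  have F1c: "F1 \<in> carrier_vec k" unfolding F1_def using wkc y by simp
  define s where "s = vec 1 (\<lambda>_::nat. (1/2) * (vnorm r)\<^sup>2 - \<sigma>\<^sup>2 / 2)"
  have sc: "s \<in> carrier_vec 1" unfolding s_def by simp
  have VF1: "V *\<^sub>v F1 = lam \<cdot>\<^sub>v (V *\<^sub>v wk) + V *\<^sub>v ybar"
    unfolding F1_def using Vc wkc y
    by (simp add: mult_add_distrib_mat_vec[of V n k] mult_mat_vec[of V n k])
  have Fbig: "Fmap A b \<sigma> (V *\<^sub>v ybar) lam = (V *\<^sub>v F1) @\<^sub>v s"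
    unfolding Fmap_def Axb w nr VF1 s_def ..
  have Fsmall: "Fk B c \<sigma> ybar lam = F1 @\<^sub>v s"
    unfolding Fk_def Fmap_def F1_def s_def wk_def r_def ..
  define Mb where "Mb = lam \<cdot>\<^sub>m (transpose_mat A * A) + 1\<^sub>m n"
  define Mk where "Mk = lam \<cdot>\<^sub>m (transpose_mat B * B) + 1\<^sub>m k"
  have Mbc: "Mb \<in> carrier_mat n n" unfolding Mb_def using A by simp
  have Mkc: "Mk \<in> carrier_mat k k" unfolding Mk_def using Bc by simp
  have Jbig: "Jmap A b (V *\<^sub>v ybar) lam = four_block_mat Mb (mat_of_cols n [V *\<^sub>v wk]) (mat_of_rows n [V *\<^sub>v wk]) (0\<^sub>m 1 1)"
    unfolding Jmap_def Axb w Mb_def using A by simp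
  have Jsmall: "Jk B c ybar lam = four_block_mat Mk (mat_of_cols k [wk]) (mat_of_rows k [wk]) (0\<^sub>m 1 1)"
    unfolding Jk_def Jmap_def Mk_def wk_def r_def using Bc by simp
  define J where "J = Jk B c ybar lam"
  have Jc: "J \<in> carrier_mat (k+1) (k+1)" unfolding J_def Jsmall
    using four_block_carrier_mat[OF Mkc zero_carrier_mat[of 1 1]] by simp
  have nonsJ: "invertible_mat J" using nonsing unfolding J_def B_def c_def .
  have "mat_inverse J \<noteq> None"
  proof
    assume N: "mat_inverse J = None"
    from nonsJ obtain Bi where i1: "inverts_mat J Bi" and i2: "inverts_mat Bi J"
      unfolding invertible_mat_def by blast
    have e1: "J * Bi = 1\<^sub>m (k+1)" using i1 Jc unfolding inverts_mat_def by simp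
    have e2: "Bi * J = 1\<^sub>m (dim_row Bi)" using i2 unfolding inverts_mat_def .
    have "dim_col Bi = k+1" using arg_cong[OF e1, of dim_col] by simp
    moreover have "dim_row Bi = k+1" using arg_cong[OF e2, of dim_col] Jc by simp
    ultimately have Bic: "Bi \<in> carrier_mat (k+1) (k+1)" by auto
    have e2': "Bi * J = 1\<^sub>m (k+1)" using e2 Bic by simp
    have "J \<in> Units (ring_mat TYPE(real) (k+1) ())"
      unfolding Units_def ring_mat_def using Jc Bic e1 e2' by auto
    with mat_inverse(1)[OF Jc N, of "()"] show False by blast
  qed
  then obtain Ji where Ji: "mat_inverse J = Some Ji" by auto
  have JJi: "J * Ji = 1\<^sub>m (k+1)" and Jic: "Ji \<in> carrier_mat (k+1) (k+1)"
    using mat_inverse(2)[OF Jc Ji] by auto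
  define Fs where "Fs = Fk B c \<sigma> ybar lam"
  have Fsc: "Fs \<in> carrier_vec (k+1)" unfolding Fs_def Fsmall using append_carrier_vec[OF F1c sc] by simp
  define d where "d = - (Ji *\<^sub>v Fs)"
  have dc: "d \<in> carrier_vec (k+1)" unfolding d_def using Jic Fsc by simp
  have Jd: "J *\<^sub>v d = - Fs"
  proof -
    have "J *\<^sub>v d = - (J *\<^sub>v (Ji *\<^sub>v Fs))" unfolding d_def
      using Jc Jic Fsc by (intro mat_vec_uminus) simp
    also have "J *\<^sub>v (Ji *\<^sub>v Fs) = Fs" using Jc Jic Fsc JJi
      using assoc_mult_mat_vec[OF Jc Jic Fsc] JJi Fsc by simp
    finally show ?thesis .
  qed
  define dy where "dy = vec_first d k"
  define dl where "dl = d $ k"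
  have dyc: "dy \<in> carrier_vec k" unfolding dy_def by simp
  have dsplit: "dy @\<^sub>v vec 1 (\<lambda>_. dl) = d"
  proof -
    have "vec_last d 1 = vec 1 (\<lambda>_. dl)" unfolding vec_last_def dl_def
      using dc by (intro eq_vecI) auto
    then show ?thesis using vec_first_last_append[of d k 1] dc unfolding dy_def by simp
  qed
  have small1: "d \<bullet> (transpose_mat J *\<^sub>v Fs) = - (Fs \<bullet> Fs)"
  proof -
    have "d \<bullet> (transpose_mat J *\<^sub>v Fs) = (transpose_mat J *\<^sub>v Fs) \<bullet> d"
      using dc Jc Fsc by (intro comm_scalar_prod[of _ "k+1"]) auto
    also have "\<dots> = Fs \<bullet> (J *\<^sub>v d)" by (rule transpose_vec_mult_scalar[OF Jc dc Fsc])
    also have "\<dots> = - (Fs \<bullet> Fs)" unfolding Jd using Fsc by simp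
    finally show ?thesis .
  qed
  have small2: "d \<bullet> (transpose_mat J *\<^sub>v Fs) = F1 \<bullet> (Mk *\<^sub>v dy) + dl * (F1 \<bullet> wk) + s $ 0 * (wk \<bullet> dy)"
    unfolding dsplit[symmetric] J_def Jsmall Fs_def Fsmall
    by (rule block_prod[OF Mkc wkc dyc F1c sc])
  define dx where "dx = V *\<^sub>v dy"
  have dxc: "dx \<in> carrier_vec n" unfolding dx_def using mult_mat_vec_carrier[OF Vc dyc] .
  have Vwc: "V *\<^sub>v wk \<in> carrier_vec n" using mult_mat_vec_carrier[OF Vc wkc] .
  have VF1c: "V *\<^sub>v F1 \<in> carrier_vec n" using mult_mat_vec_carrier[OF Vc F1c] .
  have AVp: "\<And>p. p \<in> carrier_vec k \<Longrightarrow> A *\<^sub>v (V *\<^sub>v p) = U *\<^sub>v (B *\<^sub>v p)"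
    using assoc_mult_mat_vec[OF A Vc] assoc_mult_mat_vec[OF Uc Bc] AV by simp
  have big: "(dx @\<^sub>v vec 1 (\<lambda>_. dl)) \<bullet> grad_merit A b \<sigma> (V *\<^sub>v ybar) lam
      = (V *\<^sub>v F1) \<bullet> (Mb *\<^sub>v dx) + dl * ((V *\<^sub>v F1) \<bullet> (V *\<^sub>v wk)) + s $ 0 * ((V *\<^sub>v wk) \<bullet> dx)"
    unfolding grad_merit_def Jbig Fbig
    by (rule block_prod[OF Mbc Vwc dxc VF1c sc])
  have t1: "(V *\<^sub>v F1) \<bullet> (Mb *\<^sub>v dx) = F1 \<bullet> (Mk *\<^sub>v dy)"
  proof -
    have "(V *\<^sub>v F1) \<bullet> (Mb *\<^sub>v dx) = lam * ((A *\<^sub>v (V *\<^sub>v F1)) \<bullet> (A *\<^sub>v dx)) + (V *\<^sub>v F1) \<bullet> dx"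
      unfolding Mb_def by (rule quad_form[OF A VF1c dxc])
    also have "\<dots> = lam * ((B *\<^sub>v F1) \<bullet> (B *\<^sub>v dy)) + F1 \<bullet> dy"
      unfolding dx_def AVp[OF F1c] AVp[OF dyc] orth_prod[OF Vc VV F1c dyc]
      using orth_prod[OF Uc UU mult_mat_vec_carrier[OF Bc F1c] mult_mat_vec_carrier[OF Bc dyc]] by simp
    also have "\<dots> = F1 \<bullet> (Mk *\<^sub>v dy)"
      unfolding Mk_def by (rule quad_form[OF Bc F1c dyc, symmetric])
    finally show ?thesis .
  qed
  have t2: "(V *\<^sub>v F1) \<bullet> (V *\<^sub>v wk) = F1 \<bullet> wk" by (rule orth_prod[OF Vc VV F1c wkc])
  have t3: "(V *\<^sub>v wk) \<bullet> dx = wk \<bullet> dy" unfolding dx_def by (rule orth_prod[OF Vc VV wkc dyc])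
  define F where "F = Fmap A b \<sigma> (V *\<^sub>v ybar) lam"
  have Fc: "F \<in> carrier_vec (n+1)" unfolding F_def Fbig using append_carrier_vec[OF VF1c sc] by simp
  have FF: "F \<bullet> F = Fs \<bullet> Fs"
    unfolding F_def Fbig Fs_def Fsmall
    using scalar_prod_append[OF VF1c sc VF1c sc] scalar_prod_append[OF F1c sc F1c sc]
      orth_prod[OF Vc VV F1c F1c] by simp
  have nF: "(vnorm F)\<^sup>2 = F \<bullet> F" unfolding vnorm_def using self_prod_ge[of F] by (simp add: real_sqrt_pow2)
  have main: "(dx @\<^sub>v vec 1 (\<lambda>_. dl)) \<bullet> grad_merit A b \<sigma> (V *\<^sub>v ybar) lam = - (vnorm F)\<^sup>2"
    unfolding big t1 t2 t3 nF FF small1[symmetric] small2 ..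
  have le: "- (vnorm F)\<^sup>2 \<le> 0" by simp
  have lt: "F \<noteq> 0\<^sub>v (n+1) \<Longrightarrow> - (vnorm F)\<^sup>2 < 0" unfolding nF using self_prod_pos[OF Fc] by simp
  have eqs: "Vmat n v k = V" "Bmat mu nu k = B" "cvec b k = c"
    by (simp_all add: V_def B_def c_def)
  have eq2: "Jk B c ybar lam = J" "Fk B c \<sigma> ybar lam = Fs" "the (mat_inverse J) = Ji"
    using Ji by (simp_all only: J_def Fs_def option.sel)
  show ?thesis
    unfolding Let_def eqs eq2 d_def[symmetric] dy_def[symmetric] dl_def[symmetric]
      dx_def[symmetric] F_def[symmetric]
    using main le lt by auto
qed

end
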